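(* Let $f:\mathbb{R}^n\to\mathbb{R}$ be a convex function of class $C^2$. (i) Suppose $f\in\mathcal{F}$. Then for every increasing function $G:\mathbb{R}\to\mathbb{R}$ of class $C^1$ with $G(0)=0$, there exists $\phi\in\mathcal{F}$ such that: - for all $x$ with $\nabla f(x)\neq0$, $$\nabla\phi(x)=G(\|\nabla f(x)\|)\,\frac{\nabla f(x)}{\|\nabla f(x)\|}; \qquad (\ast)$$ - for all $x$ with $\nabla f(x)=0$, $\nabla\phi(x)=0$. (ii) Suppose there exist an increasing function $G:\mathbb{R}\to\mathbb{R}$ of class $C^1$ and a convex function $\phi:\mathbb{R}^n\to\mathbb{R}$ of class $C^2$ such that: - $G(0)=0$; - $sG'(s)-G(s)\neq0$ for almost every $s\in\mathbb{R}$; - $(\ast)$ holds at every $x$ with $\nabla f(x)\ne0$. Then $f\in\mathcal{F}$.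
   Context: $\|\cdot\|$ is the Euclidean norm on $\mathbb{R}^n$. $\mathcal{F}$ denotes the set of functions $f:\mathbb{R}^n\to\mathbb{R}$ such that: 1. $f$ is convex and of class $C^2$; 2. for every $x\in\mathbb{R}^n$ there exists $\lambda\in\mathbb{R}$ with $\mathrm{Hess}\,f(x)\,\nabla f(x)=\lambda\,\nabla f(x)$. *)

theory Defs
  imports "HOL-Analysis.Analysis"
begin

text \<open>Gradient of a real-valued function on R^n (meaningful where f is differentiable):
  the unique vector g with derivative h \<mapsto> h \<bullet> g.\<close>
definition grad :: "(real^'n \<Rightarrow> real) \<Rightarrow> real^'n \<Rightarrow> real^'n" where
  "grad f x = (THE g. (f has_derivative (\<lambda>h. h \<bullet> g)) (at x))"

definition Hess :: "(real^'n \<Rightarrow> real) \<Rightarrow> real^'n \<Rightarrow> real^'n^'n" where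
  "Hess f x = (THE M. (grad f has_derivative (\<lambda>h. M *v h)) (at x))"

definition C2 :: "(real^'n \<Rightarrow> real) \<Rightarrow> bool" where
  "C2 f \<longleftrightarrow> (\<forall>x. f differentiable (at x)) \<and> (\<forall>x. grad f differentiable (at x))
     \<and> continuous_on UNIV (Hess f)"

definition C1_real :: "(real \<Rightarrow> real) \<Rightarrow> bool" where
  "C1_real G \<longleftrightarrow> (\<forall>s. G differentiable (at s)) \<and> continuous_on UNIV (deriv G)"

definition classF :: "(real^'n \<Rightarrow> real) set" where
  "classF = {f. convex_on UNIV f \<and> C2 f \<and>
              (\<forall>x. \<exists>c::real. Hess f x *v grad f x = c *\<^sub>R grad f x)}"

end

theory Submission
  imports Defs
begin

lemma linear_inner_repr:
  fixes D :: "real^'n \<Rightarrow> real"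
  assumes "linear D"
  shows "D h = h \<bullet> (\<chi> i. D (axis i 1))"
proof -
  have "(\<Sum>i\<in>UNIV. h$i *s axis i 1) = h" by (rule basis_expansion)
  hence "h = (\<Sum>i\<in>UNIV. h$i *\<^sub>R axis i 1)"
    by (simp only: scalar_mult_eq_scaleR)
  hence "D h = D (\<Sum>i\<in>UNIV. h$i *\<^sub>R axis i 1)" by simp
  also have "\<dots> = (\<Sum>i\<in>UNIV. h$i * D (axis i 1))"
    using assms by (simp add: linear_sum linear_scale)
  also have "\<dots> = h \<bullet> (\<chi> i. D (axis i 1))"
    by (simp add: inner_vec_def)
  finally show ?thesis .
qed

lemma grad_unique:
  assumes "(f has_derivative (\<lambda>h. h \<bullet> g)) (at x)"
  shows "grad f x = g"
  unfolding grad_def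
proof (rule the_equality)
  show "(f has_derivative (\<lambda>h. h \<bullet> g)) (at x)" by fact
next
  fix g' assume "(f has_derivative (\<lambda>h. h \<bullet> g')) (at x)"
  hence "(\<lambda>h. h \<bullet> g') = (\<lambda>h. h \<bullet> g)" using assms has_derivative_unique by blast
  hence "(g' - g) \<bullet> g' = (g' - g) \<bullet> g" by metis
  hence "(g' - g) \<bullet> (g' - g) = 0" by (simp add: inner_diff_right)
  thus "g' = g" by simp
qed

lemma grad_works:
  assumes "f differentiable (at x)"
  shows "(f has_derivative (\<lambda>h. h \<bullet> grad f x)) (at x)"
proof -
  obtain D where D: "(f has_derivative D) (at x)" using assms differentiable_def by blast
  hence "linear D" using has_derivative_linear by blast
  hence "D = (\<lambda>h. h \<bullet> (\<chi> i. D (axis i 1)))" using linear_inner_repr by blast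
  with D have "(f has_derivative (\<lambda>h. h \<bullet> (\<chi> i. D (axis i 1)))) (at x)" by simp
  thus ?thesis using grad_unique by metis
qed

lemma Hess_unique:
  assumes "(grad f has_derivative (\<lambda>h. M *v h)) (at x)"
  shows "Hess f x = M"
  unfolding Hess_def
proof (rule the_equality)
  show "(grad f has_derivative (\<lambda>h. M *v h)) (at x)" by fact
next
  fix M' assume "(grad f has_derivative (\<lambda>h. M' *v h)) (at x)"
  hence "(\<lambda>h. M' *v h) = (\<lambda>h. M *v h)" using assms has_derivative_unique by blast
  thus "M' = M" by (metis matrix_eq)
qed

lemma Hess_works:
  assumes "grad f differentiable (at x)"
  shows "(grad f has_derivative (\<lambda>h. Hess f x *v h)) (at x)"
proof -
  obtain D where D: "(grad f has_derivative D) (at x)" using assms differentiable_def by blast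
  hence "linear D" using has_derivative_linear by blast
  hence "D = (\<lambda>h. matrix D *v h)" by (simp add: matrix_vector_mul)
  with D have "(grad f has_derivative (\<lambda>h. matrix D *v h)) (at x)" by simp
  thus ?thesis using Hess_unique by metis
qed

lemma C2_grad: "C2 f \<Longrightarrow> (f has_derivative (\<lambda>h. h \<bullet> grad f x)) (at x)"
  unfolding C2_def using grad_works by blast

lemma C2_Hess: "C2 f \<Longrightarrow> (grad f has_derivative (\<lambda>h. Hess f x *v h)) (at x)"
  unfolding C2_def using Hess_works by blast

lemma C2_grad_cont: "C2 f \<Longrightarrow> continuous_on UNIV (grad f)"
  unfolding C2_def by (meson continuous_at_imp_continuous_on differentiable_imp_continuous_within)

lemma C2_Hess_cont: "C2 f \<Longrightarrow> continuous_on UNIV (Hess f)"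
  unfolding C2_def by blast

lemma mono_deriv_nonneg:
  fixes G :: "real \<Rightarrow> real"
  assumes "mono G" "(G has_real_derivative l) (at s)"
  shows "l \<ge> 0"
proof (rule ccontr)
  assume "\<not> l \<ge> 0"
  then obtain d where "d > 0" "\<forall>h>0. h < d \<longrightarrow> G s > G (s + h)"
    using DERIV_neg_dec_right assms(2) by (meson not_le)
  hence "G s > G (s + d/2)" by simp
  moreover have "G s \<le> G (s + d/2)" using assms(1) \<open>d>0\<close> by (simp add: monoD)
  ultimately show False by simp
qed

lemma mv_scaleR: "(A::real^'n^'m) *v (c *\<^sub>R v) = c *\<^sub>R (A *v v)"
  by (simp add: vec_eq_iff matrix_vector_mult_def sum_distrib_left algebra_simps)

lemma bounded_linear_mv: "bounded_linear (\<lambda>A::real^'n^'m. A *v h)"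
proof -
  have "linear (\<lambda>A::real^'n^'m. A *v h)"
    by (rule linearI) (simp_all add: matrix_vector_mult_add_rdistrib scaleR_matrix_vector_assoc)
  thus ?thesis by (simp add: linear_conv_bounded_linear)
qed

lemma continuous_on_mv:
  fixes H :: "'a::topological_space \<Rightarrow> real^'n^'m"
  assumes "continuous_on S H"
  shows "continuous_on S (\<lambda>y. H y *v h)"
  using bounded_linear.continuous_on[OF bounded_linear_mv assms] .

lemma schwarz_mvt:
  fixes f :: "real^'n \<Rightarrow> real"
  assumes "C2 f" "t > 0"
  shows "\<exists>p. dist p x \<le> t * (norm h + norm k) \<and>
     f (x + t *\<^sub>R h + t *\<^sub>R k) - f (x + t *\<^sub>R h) - f (x + t *\<^sub>R k) + f x
       = t^2 * (h \<bullet> (Hess f p *v k))"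
proof -
  define u where "u \<sigma> = f (x + \<sigma> *\<^sub>R h + t *\<^sub>R k) - f (x + \<sigma> *\<^sub>R h)" for \<sigma>
  define u' where "u' \<sigma> = (\<lambda>s::real. s * (h \<bullet> grad f (x + \<sigma> *\<^sub>R h + t *\<^sub>R k) - h \<bullet> grad f (x + \<sigma> *\<^sub>R h)))" for \<sigma>
  have du: "(u has_derivative u' \<sigma>) (at \<sigma>)" for \<sigma>
  proof -
    have d1: "((\<lambda>\<sigma>. x + \<sigma> *\<^sub>R h + t *\<^sub>R k) has_derivative (\<lambda>s. s *\<^sub>R h)) (at \<sigma>)"
      by (auto intro!: derivative_eq_intros)
    have 1: "((\<lambda>\<sigma>. f (x + \<sigma> *\<^sub>R h + t *\<^sub>R k)) has_derivative (\<lambda>s. (s *\<^sub>R h) \<bullet> grad f (x + \<sigma> *\<^sub>R h + t *\<^sub>R k))) (at \<sigma>)"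
      using has_derivative_compose[of "\<lambda>\<sigma>. x + \<sigma> *\<^sub>R h + t *\<^sub>R k" "\<lambda>s. s *\<^sub>R h" \<sigma> UNIV f,
          OF d1 C2_grad[OF assms(1)]] by simp
    have d2: "((\<lambda>\<sigma>. x + \<sigma> *\<^sub>R h) has_derivative (\<lambda>s. s *\<^sub>R h)) (at \<sigma>)"
      by (auto intro!: derivative_eq_intros)
    have 2: "((\<lambda>\<sigma>. f (x + \<sigma> *\<^sub>R h)) has_derivative (\<lambda>s. (s *\<^sub>R h) \<bullet> grad f (x + \<sigma> *\<^sub>R h))) (at \<sigma>)"
      using has_derivative_compose[of "\<lambda>\<sigma>. x + \<sigma> *\<^sub>R h" "\<lambda>s. s *\<^sub>R h" \<sigma> UNIV f,
          OF d2 C2_grad[OF assms(1)]] by simp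
    show ?thesis unfolding u_def u'_def
      using has_derivative_diff[OF 1 2] by (simp add: algebra_simps)
  qed
  have cu: "continuous_on {0..t} u"
    using du by (meson continuous_at_imp_continuous_on has_derivative_continuous)
  obtain \<sigma> where \<sigma>: "0 < \<sigma>" "\<sigma> < t" "u t - u 0 = u' \<sigma> (t - 0)"
    using mvt[OF assms(2) cu du] by blast
  define w where "w \<tau> = h \<bullet> grad f (x + \<sigma> *\<^sub>R h + \<tau> *\<^sub>R k)" for \<tau>
  define w' where "w' \<tau> = (\<lambda>s::real. s * (h \<bullet> (Hess f (x + \<sigma> *\<^sub>R h + \<tau> *\<^sub>R k) *v k)))" for \<tau>
  have dw: "(w has_derivative w' \<tau>) (at \<tau>)" for \<tau>
  proof -
    have d3: "((\<lambda>\<tau>. x + \<sigma> *\<^sub>R h + \<tau> *\<^sub>R k) has_derivative (\<lambda>s. s *\<^sub>R k)) (at \<tau>)"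
      by (auto intro!: derivative_eq_intros)
    have "((\<lambda>\<tau>. grad f (x + \<sigma> *\<^sub>R h + \<tau> *\<^sub>R k)) has_derivative (\<lambda>s. Hess f (x + \<sigma> *\<^sub>R h + \<tau> *\<^sub>R k) *v (s *\<^sub>R k))) (at \<tau>)"
      using has_derivative_compose[of "\<lambda>\<tau>. x + \<sigma> *\<^sub>R h + \<tau> *\<^sub>R k" "\<lambda>s. s *\<^sub>R k" \<tau> UNIV "grad f",
          OF _ C2_Hess[OF assms(1)]] d3 by simp
    from has_derivative_inner_right[OF this, of h] show ?thesis
      unfolding w_def w'_def by (simp add: mv_scaleR)
  qed
  have cw: "continuous_on {0..t} w"
    using dw by (meson continuous_at_imp_continuous_on has_derivative_continuous)
  obtain \<tau> where \<tau>: "0 < \<tau>" "\<tau> < t" "w t - w 0 = w' \<tau> (t - 0)"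
    using mvt[OF assms(2) cw dw] by blast
  define p where "p = x + \<sigma> *\<^sub>R h + \<tau> *\<^sub>R k"
  have "dist p x = norm (\<sigma> *\<^sub>R h + \<tau> *\<^sub>R k)" by (simp add: p_def dist_norm)
  also have "\<dots> \<le> norm (\<sigma> *\<^sub>R h) + norm (\<tau> *\<^sub>R k)" by (rule norm_triangle_ineq)
  also have "\<dots> = \<sigma> * norm h + \<tau> * norm k" using \<sigma> \<tau> by simp
  also have "\<dots> \<le> t * norm h + t * norm k"
    using \<sigma> \<tau> by (intro add_mono mult_right_mono) auto
  finally have "dist p x \<le> t * (norm h + norm k)" by (simp add: algebra_simps)
  moreover have "f (x + t *\<^sub>R h + t *\<^sub>R k) - f (x + t *\<^sub>R h) - f (x + t *\<^sub>R k) + f x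
       = t^2 * (h \<bullet> (Hess f p *v k))"
  proof -
    have "f (x + t *\<^sub>R h + t *\<^sub>R k) - f (x + t *\<^sub>R h) - f (x + t *\<^sub>R k) + f x = u t - u 0"
      by (simp add: u_def)
    also have "\<dots> = t * (w t - w 0)" using \<sigma>(3) by (simp add: u'_def w_def)
    also have "\<dots> = t^2 * (h \<bullet> (Hess f p *v k))"
      using \<tau>(3) by (simp add: w'_def p_def power2_eq_square)
    finally show ?thesis .
  qed
  ultimately show ?thesis by blast
qed

lemma schwarz:
  fixes f :: "real^'n \<Rightarrow> real"
  assumes "C2 f"
  shows "k \<bullet> (Hess f x *v h) = h \<bullet> (Hess f x *v k)"
proof (rule ccontr)
  define a where "a y = k \<bullet> (Hess f y *v h)" for y
  define b where "b y = h \<bullet> (Hess f y *v k)" for y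
  assume "k \<bullet> (Hess f x *v h) \<noteq> h \<bullet> (Hess f x *v k)"
  hence ne: "a x \<noteq> b x" by (simp add: a_def b_def)
  define e where "e = \<bar>a x - b x\<bar> / 2"
  have e: "e > 0" using ne by (simp add: e_def)
  have ca: "continuous_on UNIV a" unfolding a_def
    by (intro continuous_intros continuous_on_mv C2_Hess_cont[OF assms])
  have cb: "continuous_on UNIV b" unfolding b_def
    by (intro continuous_intros continuous_on_mv C2_Hess_cont[OF assms])
  obtain d1 where d1: "d1 > 0" "\<And>y. dist y x < d1 \<Longrightarrow> dist (a y) (a x) < e"
    using ca e by (metis UNIV_I continuous_on_iff)
  obtain d2 where d2: "d2 > 0" "\<And>y. dist y x < d2 \<Longrightarrow> dist (b y) (b x) < e"
    using cb e by (metis UNIV_I continuous_on_iff)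
  define t where "t = min d1 d2 / (2 * (norm h + norm k + 1))"
  have "0 < 2 * (norm h + norm k + 1)" by (smt (verit) norm_ge_zero)
  hence t: "t > 0" using d1 d2 unfolding t_def by (intro divide_pos_pos) auto
  have tb: "t * (norm h + norm k) < min d1 d2"
  proof -
    have "t * (norm h + norm k) \<le> t * (norm h + norm k + 1)" using t by simp
    also have "\<dots> = min d1 d2 / 2" unfolding t_def
      using \<open>0 < 2 * (norm h + norm k + 1)\<close> by (simp add: field_simps)
    also have "\<dots> < min d1 d2" using d1 d2 by (simp add: min_def)
    finally show ?thesis .
  qed
  obtain p where p: "dist p x \<le> t * (norm h + norm k)"
    "f (x + t *\<^sub>R h + t *\<^sub>R k) - f (x + t *\<^sub>R h) - f (x + t *\<^sub>R k) + f x = t^2 * b p"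
    using schwarz_mvt[OF assms t, of x h k] unfolding b_def by blast
  obtain q where q: "dist q x \<le> t * (norm k + norm h)"
    "f (x + t *\<^sub>R k + t *\<^sub>R h) - f (x + t *\<^sub>R k) - f (x + t *\<^sub>R h) + f x = t^2 * a q"
    using schwarz_mvt[OF assms t, of x k h] unfolding a_def by blast
  have "t^2 * b p = t^2 * a q" using p(2) q(2) by (simp add: algebra_simps)
  hence "b p = a q" using t by simp
  moreover have "dist (b p) (b x) < e" using d2 p(1) tb by auto
  moreover have "dist (a q) (a x) < e" using d1 q(1) tb by (auto simp: add.commute)
  ultimately have "\<bar>a x - b x\<bar> < 2 * e" by (simp add: dist_real_def)
  thus False by (simp add: e_def)
qed

lemma times_eta: "(\<lambda>t. t * c) = (*) (c::real)"
  by (rule ext) simp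

lemma line_deriv:
  assumes "(\<phi> has_derivative (\<lambda>h. h \<bullet> F (x + s *\<^sub>R d))) (at (x + s *\<^sub>R d))"
  shows "((\<lambda>s. \<phi> (x + s *\<^sub>R d)) has_real_derivative (d \<bullet> F (x + s *\<^sub>R d))) (at s)"
proof -
  have d1: "((\<lambda>s. x + s *\<^sub>R d) has_derivative (\<lambda>s. s *\<^sub>R d)) (at s)"
    by (auto intro!: derivative_eq_intros)
  have "((\<lambda>s. \<phi> (x + s *\<^sub>R d)) has_derivative (\<lambda>t. (t *\<^sub>R d) \<bullet> F (x + s *\<^sub>R d))) (at s)"
    using has_derivative_compose[OF d1 assms] by simp
  thus ?thesis unfolding has_field_derivative_def by (simp add: times_eta)
qed

lemma line_deriv2:
  fixes F :: "real^'n \<Rightarrow> real^'n"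
  assumes "(F has_derivative (\<lambda>h. M *v h)) (at (x + s *\<^sub>R d))"
  shows "((\<lambda>s. d \<bullet> F (x + s *\<^sub>R d)) has_real_derivative (d \<bullet> (M *v d))) (at s)"
proof -
  have d1: "((\<lambda>s. x + s *\<^sub>R d) has_derivative (\<lambda>s. s *\<^sub>R d)) (at s)"
    by (auto intro!: derivative_eq_intros)
  have "((\<lambda>s. F (x + s *\<^sub>R d)) has_derivative (\<lambda>t. M *v (t *\<^sub>R d))) (at s)"
    using has_derivative_compose[OF d1 assms] by simp
  from has_derivative_inner_right[OF this, of d]
  show ?thesis unfolding has_field_derivative_def by (simp add: mv_scaleR times_eta)
qed

lemma PSD_imp_convex:
  fixes \<phi> :: "real^'n \<Rightarrow> real"
  assumes d1: "\<And>x. (\<phi> has_derivative (\<lambda>h. h \<bullet> F x)) (at x)"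
    and d2: "\<And>x. (F has_derivative (\<lambda>h. M x *v h)) (at x)"
    and psd: "\<And>x h. h \<bullet> (M x *v h) \<ge> 0"
  shows "convex_on UNIV \<phi>"
proof (rule convex_onI)
  fix t :: real and x y :: "real^'n" assume t: "0 < t" "t < 1"
  define d where "d = y - x"
  define \<psi> where "\<psi> s = \<phi> (x + s *\<^sub>R d)" for s
  have "convex_on UNIV \<psi>"
  proof (rule f''_ge0_imp_convex)
    show "DERIV \<psi> s :> d \<bullet> F (x + s *\<^sub>R d)" for s unfolding \<psi>_def by (rule line_deriv) (rule d1)
    show "DERIV (\<lambda>s. d \<bullet> F (x + s *\<^sub>R d)) s :> d \<bullet> (M (x + s *\<^sub>R d) *v d)" for s
      by (rule line_deriv2) (rule d2)
    show "d \<bullet> (M (x + s *\<^sub>R d) *v d) \<ge> 0" for s by (rule psd)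
  qed simp
  hence "\<psi> ((1 - t) *\<^sub>R 0 + t *\<^sub>R 1) \<le> (1 - t) * \<psi> 0 + t * \<psi> 1"
    using t by (intro convex_onD) auto
  moreover have "x + t *\<^sub>R d = (1 - t) *\<^sub>R x + t *\<^sub>R y" by (simp add: d_def algebra_simps)
  ultimately show "\<phi> ((1 - t) *\<^sub>R x + t *\<^sub>R y) \<le> (1 - t) * \<phi> x + t * \<phi> y"
    by (simp add: \<psi>_def d_def)
qed simp

lemma convex_PSD:
  fixes f :: "real^'n \<Rightarrow> real"
  assumes cv: "convex_on UNIV f" and c2: "C2 f"
  shows "h \<bullet> (Hess f x *v h) \<ge> 0"
proof -
  define \<psi> where "\<psi> s = f (x + s *\<^sub>R h)" for s
  define \<psi>' where "\<psi>' s = h \<bullet> grad f (x + s *\<^sub>R h)" for s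
  have d: "(\<psi> has_real_derivative \<psi>' s) (at s)" for s
    unfolding \<psi>_def \<psi>'_def by (rule line_deriv) (rule C2_grad[OF c2])
  have cpsi: "convex_on UNIV \<psi>"
    unfolding convex_on_def
  proof (intro conjI ballI allI impI)
    fix a b u v :: real assume uv: "0 \<le> u" "0 \<le> v" "u + v = 1"
    have "x + (u * a + v * b) *\<^sub>R h = u *\<^sub>R (x + a *\<^sub>R h) + v *\<^sub>R (x + b *\<^sub>R h)"
    proof -
      have "u *\<^sub>R (x + a *\<^sub>R h) + v *\<^sub>R (x + b *\<^sub>R h) = (u + v) *\<^sub>R x + (u * a + v * b) *\<^sub>R h"
        by (simp add: scaleR_add_right scaleR_add_left)
      thus ?thesis using uv by simp
    qed
    thus "\<psi> (u *\<^sub>R a + v *\<^sub>R b) \<le> u * \<psi> a + v * \<psi> b"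
      using cv uv unfolding \<psi>_def convex_on_def by simp
  qed simp
  have mono: "mono \<psi>'"
  proof (rule monoI)
    fix a b :: real assume ab: "a \<le> b"
    have 1: "\<psi> b - \<psi> a \<ge> \<psi>' a * (b - a)"
      by (rule convex_on_imp_above_tangent[OF cpsi]) (auto intro: has_field_derivative_at_within d)
    have 2: "\<psi> a - \<psi> b \<ge> \<psi>' b * (a - b)"
      by (rule convex_on_imp_above_tangent[OF cpsi]) (auto intro: has_field_derivative_at_within d)
    from 1 2 have "(\<psi>' b - \<psi>' a) * (b - a) \<ge> 0" by (simp add: algebra_simps)
    thus "\<psi>' a \<le> \<psi>' b" using ab
      by (cases "a = b") (auto simp: zero_le_mult_iff)
  qed
  have "(\<psi>' has_real_derivative (h \<bullet> (Hess f (x + 0 *\<^sub>R h) *v h))) (at 0)"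
    unfolding \<psi>'_def by (rule line_deriv2) (rule C2_Hess[OF c2])
  from mono_deriv_nonneg[OF mono this] show ?thesis by simp
qed

lemma continuous_on_mv2:
  fixes A :: "'a::topological_space \<Rightarrow> real^'n^'m"
  assumes "continuous_on S A" "continuous_on S b"
  shows "continuous_on S (\<lambda>y. A y *v b y)"
proof -
  have "(\<lambda>y. A y *v b y) = (\<lambda>y. \<chi> i. \<Sum>j\<in>UNIV. A y $ i $ j * b y $ j)"
    by (simp add: matrix_vector_mult_def)
  moreover have "continuous_on S (\<lambda>y. \<chi> i. \<Sum>j\<in>UNIV. A y $ i $ j * b y $ j)"
    by (intro continuous_on_vec_lambda continuous_intros continuous_on_component assms)
  ultimately show ?thesis by metis
qed

lemma potential:
  fixes F :: "real^'n \<Rightarrow> real^'n" and M :: "real^'n \<Rightarrow> real^'n^'n"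
  assumes dF: "\<And>x. (F has_derivative (\<lambda>h. M x *v h)) (at x)"
    and cM: "continuous_on UNIV M"
    and sym: "\<And>x h k. k \<bullet> (M x *v h) = h \<bullet> (M x *v k)"
  shows "((\<lambda>x. integral {0..1} (\<lambda>t. F (t *\<^sub>R x) \<bullet> x)) has_derivative (\<lambda>h. h \<bullet> F x0)) (at x0)"
proof -
  have cF: "continuous_on UNIV F"
    using dF by (meson continuous_at_imp_continuous_on has_derivative_continuous)
  define w where "w x t = t *\<^sub>R (M (t *\<^sub>R x) *v x) + F (t *\<^sub>R x)" for x and t :: real
  define fx where "fx x t = blinfun_inner_left (w x t)" for x t
  have deriv: "((\<lambda>x. F (t *\<^sub>R x) \<bullet> x) has_derivative blinfun_apply (fx x t)) (at x within UNIV)" for x t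
  proof -
    have d1: "((\<lambda>x. t *\<^sub>R x) has_derivative (\<lambda>h. t *\<^sub>R h)) (at x)"
      by (auto intro!: derivative_eq_intros)
    have d2: "((\<lambda>x. F (t *\<^sub>R x)) has_derivative (\<lambda>h. M (t *\<^sub>R x) *v (t *\<^sub>R h))) (at x)"
      using has_derivative_compose[OF d1 dF] by simp
    have d3: "((\<lambda>x. F (t *\<^sub>R x) \<bullet> x) has_derivative
        (\<lambda>h. F (t *\<^sub>R x) \<bullet> h + (M (t *\<^sub>R x) *v (t *\<^sub>R h)) \<bullet> x)) (at x)"
      using has_derivative_inner[OF d2 has_derivative_ident] by simp
    have "(\<lambda>h. F (t *\<^sub>R x) \<bullet> h + (M (t *\<^sub>R x) *v (t *\<^sub>R h)) \<bullet> x) = blinfun_apply (fx x t)"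
    proof
      fix h
      have "(M (t *\<^sub>R x) *v (t *\<^sub>R h)) \<bullet> x = t * (x \<bullet> (M (t *\<^sub>R x) *v h))"
        by (simp add: mv_scaleR inner_commute)
      also have "\<dots> = t * (h \<bullet> (M (t *\<^sub>R x) *v x))" using sym by simp
      finally show "F (t *\<^sub>R x) \<bullet> h + (M (t *\<^sub>R x) *v (t *\<^sub>R h)) \<bullet> x = blinfun_apply (fx x t) h"
        by (simp add: fx_def w_def blinfun_inner_left.rep_eq inner_add_right inner_commute)
    qed
    with d3 show ?thesis by simp
  qed
  have cw: "continuous_on (UNIV \<times> {0..1}) (\<lambda>(x, t). w x t)"
  proof -
    have c1: "continuous_on (UNIV \<times> {0..1::real}) (\<lambda>p::((real^'n) \<times> real). snd p *\<^sub>R fst p)"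
      by (intro continuous_on_scaleR continuous_on_fst continuous_on_snd continuous_on_id)
    have cM': "continuous_on (UNIV \<times> {0..1::real}) (\<lambda>p. M (snd p *\<^sub>R fst p))"
      by (rule continuous_on_compose2[OF cM c1]) auto
    have cF': "continuous_on (UNIV \<times> {0..1::real}) (\<lambda>p. F (snd p *\<^sub>R fst p))"
      by (rule continuous_on_compose2[OF cF c1]) auto
    have "continuous_on (UNIV \<times> {0..1::real}) (\<lambda>p. snd p *\<^sub>R (M (snd p *\<^sub>R fst p) *v fst p) + F (snd p *\<^sub>R fst p))"
      by (intro continuous_intros continuous_on_mv2 cM' cF')
    thus ?thesis by (simp add: w_def case_prod_beta)
  qed
  have cfx: "continuous_on (UNIV \<times> {0..1}) (\<lambda>(x, t). fx x t)"
  proof -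
    have "continuous_on (UNIV \<times> {0..1}) (\<lambda>p. blinfun_inner_left ((\<lambda>(x, t). w x t) p))"
      using bounded_linear.continuous_on[OF bounded_linear_blinfun_inner_left cw] .
    thus ?thesis by (simp add: fx_def case_prod_beta)
  qed
  have intF: "(\<lambda>t. F (t *\<^sub>R x) \<bullet> x) integrable_on cbox 0 1" for x
  proof -
    have "continuous_on {0..1::real} (\<lambda>t. F (t *\<^sub>R x) \<bullet> x)"
      by (intro continuous_intros continuous_on_compose2[OF cF]) auto
    thus ?thesis by (simp add: integrable_continuous_real)
  qed
  have L: "((\<lambda>x. integral (cbox 0 1) (\<lambda>t. F (t *\<^sub>R x) \<bullet> x)) has_derivative integral (cbox 0 1) (fx x0))
      (at x0 within UNIV)"
    by (rule leibniz_rule[where f="\<lambda>x t. F (t *\<^sub>R x) \<bullet> x"]) (use deriv intF cfx in auto)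
  have "blinfun_apply (integral (cbox 0 1) (fx x0)) h = h \<bullet> F x0" for h
  proof -
    have cfx0: "continuous_on {0..1::real} (fx x0)"
    proof -
      have a: "continuous_on {0..1::real} (Pair x0)" by (intro continuous_intros)
      have b: "Pair x0 ` {0..1::real} \<subseteq> UNIV \<times> {0..1}" by auto
      show ?thesis using continuous_on_compose2[OF cfx a b] by simp
    qed
    have int: "fx x0 integrable_on cbox 0 1"
      using cfx0 by (simp add: integrable_continuous_real)
    have "blinfun_apply (integral (cbox 0 1) (fx x0)) h = integral {0..1} (\<lambda>t. h \<bullet> w x0 t)"
    proof -
      have int': "fx x0 integrable_on {0..1}" using int by simp
      show ?thesis
        by (simp add: blinfun_apply_integral[OF int'] fx_def blinfun_inner_left.rep_eq inner_commute)
    qed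
    also have "\<dots> = h \<bullet> F x0"
    proof -
      have "((\<lambda>t. h \<bullet> w x0 t) has_integral (h \<bullet> (1 *\<^sub>R F (1 *\<^sub>R x0)) - h \<bullet> (0 *\<^sub>R F (0 *\<^sub>R x0)))) {0..1}"
      proof (rule fundamental_theorem_of_calculus)
        fix t :: real assume "t \<in> {0..1}"
        have d1: "((\<lambda>t. t *\<^sub>R x0) has_derivative (\<lambda>s. s *\<^sub>R x0)) (at t)"
          by (auto intro!: derivative_eq_intros)
        have d2: "((\<lambda>t. F (t *\<^sub>R x0)) has_derivative (\<lambda>s. M (t *\<^sub>R x0) *v (s *\<^sub>R x0))) (at t)"
          using has_derivative_compose[OF d1 dF] by simp
        have d3: "((\<lambda>t. h \<bullet> (t *\<^sub>R F (t *\<^sub>R x0))) has_derivative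
             (\<lambda>s. h \<bullet> (t *\<^sub>R (M (t *\<^sub>R x0) *v (s *\<^sub>R x0)) + s *\<^sub>R F (t *\<^sub>R x0)))) (at t)"
          using has_derivative_inner_right[OF has_derivative_scaleR[OF has_derivative_ident d2], of h]
          by simp
        have "(\<lambda>s. h \<bullet> (t *\<^sub>R (M (t *\<^sub>R x0) *v (s *\<^sub>R x0)) + s *\<^sub>R F (t *\<^sub>R x0))) = (\<lambda>s. s *\<^sub>R (h \<bullet> w x0 t))"
          by (rule ext) (simp add: w_def mv_scaleR inner_add_right algebra_simps)
        with d3 show "((\<lambda>t. h \<bullet> (t *\<^sub>R F (t *\<^sub>R x0))) has_vector_derivative (h \<bullet> w x0 t)) (at t within {0..1})"
          unfolding has_vector_derivative_def by (simp add: has_derivative_at_withinI)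
      qed simp
      thus ?thesis by (simp add: integral_unique)
    qed
    finally show ?thesis .
  qed
  hence "blinfun_apply (integral (cbox 0 1) (fx x0)) = (\<lambda>h. h \<bullet> F x0)" by (rule ext)
  with L show ?thesis by simp
qed

definition gt :: "(real \<Rightarrow> real) \<Rightarrow> real \<Rightarrow> real" where
  "gt G s = (if s = 0 then deriv G 0 else G s / s)"

definition kk :: "(real \<Rightarrow> real) \<Rightarrow> real^'n \<Rightarrow> real" where
  "kk G v = (if v = 0 then 0 else (norm v * deriv G (norm v) - G (norm v)) / norm v ^ 3)"

definition Tm :: "(real \<Rightarrow> real) \<Rightarrow> real^'n \<Rightarrow> real^'n" where
  "Tm G v = (G (norm v) / norm v) *\<^sub>R v"

lemma C1_DERIV: "C1_real G \<Longrightarrow> (G has_real_derivative deriv G s) (at s)"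
  unfolding C1_real_def using DERIV_deriv_iff_real_differentiable by blast

lemma C1_cont: "C1_real G \<Longrightarrow> isCont G s"
  using C1_DERIV DERIV_isCont by blast

lemma C1_deriv_cont: "C1_real G \<Longrightarrow> isCont (deriv G) s"
  unfolding C1_real_def by (simp add: continuous_on_eq_continuous_at)

lemma Tm_gt: "Tm G v = gt G (norm v) *\<^sub>R v"
  by (simp add: Tm_def gt_def)

lemma gt_isCont:
  assumes "C1_real G" "G 0 = 0"
  shows "isCont (gt G) s"
proof (cases "s = 0")
  case True
  have "((\<lambda>y. (G y - G 0) / (y - 0)) \<longlongrightarrow> deriv G 0) (at 0)"
    using C1_DERIV[OF assms(1)] has_field_derivative_iff by blast
  hence "((\<lambda>y. G y / y) \<longlongrightarrow> deriv G 0) (at 0)" using assms(2) by simp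
  hence "(gt G \<longlongrightarrow> deriv G 0) (at 0)"
    by (rule Lim_transform_eventually) (auto simp: gt_def eventually_at_filter)
  thus ?thesis using True by (simp add: isCont_def gt_def)
next
  case False
  have "isCont (\<lambda>s. G s / s) s" using False
    by (intro continuous_intros C1_cont[OF assms(1)]) auto
  moreover have "\<forall>\<^sub>F y in nhds s. G y / y = gt G y"
  proof -
    have "\<forall>\<^sub>F y in nhds s. y \<noteq> 0" using False by (rule t1_space_nhds)
    thus ?thesis by eventually_elim (simp add: gt_def)
  qed
  ultimately show ?thesis using isCont_cong[where x=s and f="\<lambda>y. G y / y" and g="gt G"] by (simp only:)
qed

lemma Tm_deriv:
  fixes v :: "real^'n"
  assumes G: "C1_real G" "G 0 = 0"
  shows "(Tm G has_derivative (\<lambda>w. gt G (norm v) *\<^sub>R w + (kk G v * (v \<bullet> w)) *\<^sub>R v)) (at v)"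
proof (cases "v = 0")
  case False
  define r where "r = norm v"
  have r: "r > 0" using False by (simp add: r_def)
  have dn: "(norm has_derivative (\<lambda>h. h \<bullet> sgn v)) (at v)" using has_derivative_norm[OF False] .
  have dg: "((\<lambda>s. G s / s) has_real_derivative ((deriv G r * r - G r * 1) / (r * r))) (at r)"
    using DERIV_divide[OF C1_DERIV[OF G(1)] DERIV_ident] r by simp
  have dgn: "((\<lambda>v. G (norm v) / norm v) has_derivative
      (\<lambda>h. ((deriv G r * r - G r * 1) / (r * r)) * (h \<bullet> sgn v))) (at v)"
    using has_derivative_compose[OF dn dg[unfolded has_field_derivative_def r_def]] unfolding r_def by simp
  have "(Tm G has_derivative (\<lambda>h. (G (norm v) / norm v) *\<^sub>R h +
       (((deriv G r * r - G r * 1) / (r * r)) * (h \<bullet> sgn v)) *\<^sub>R v)) (at v)"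
    unfolding Tm_def[abs_def] using has_derivative_scaleR[OF dgn has_derivative_ident] by simp
  moreover have "(\<lambda>h. (G (norm v) / norm v) *\<^sub>R h +
       (((deriv G r * r - G r * 1) / (r * r)) * (h \<bullet> sgn v)) *\<^sub>R v) =
      (\<lambda>w. gt G (norm v) *\<^sub>R w + (kk G v * (v \<bullet> w)) *\<^sub>R v)"
  proof
    fix h
    have "((deriv G r * r - G r * 1) / (r * r)) * (h \<bullet> sgn v) = kk G v * (v \<bullet> h)"
      using r False unfolding kk_def r_def sgn_div_norm
      by (simp add: inner_commute power3_eq_cube field_simps)
    thus "(G (norm v) / norm v) *\<^sub>R h + (((deriv G r * r - G r * 1) / (r * r)) * (h \<bullet> sgn v)) *\<^sub>R v =
        gt G (norm v) *\<^sub>R h + (kk G v * (v \<bullet> h)) *\<^sub>R v"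
      using False by (simp add: gt_def)
  qed
  ultimately show ?thesis by simp
next
  case True
  have lim: "((\<lambda>y::real^'n. gt G (norm y)) \<longlongrightarrow> gt G (norm (0::real^'n))) (at 0)"
  proof -
    have "isCont (\<lambda>y::real^'n. gt G (norm y)) 0"
      by (rule continuous_at_compose[unfolded o_def, OF continuous_norm gt_isCont[OF G]]) (rule continuous_ident)
    thus ?thesis by (simp add: isCont_def)
  qed
  have g0: "gt G (norm (0::real^'n)) = deriv G 0" by (simp add: gt_def)
  have lim2: "((\<lambda>y. \<bar>gt G (norm y) - deriv G 0\<bar>) \<longlongrightarrow> 0) (at (0::real^'n))"
    by (rule tendsto_rabs_zero, rule LIM_zero) (use lim g0 in metis)
  show ?thesis unfolding has_derivative_at
  proof
    show "bounded_linear (\<lambda>w. gt G (norm v) *\<^sub>R w + (kk G v * (v \<bullet> w)) *\<^sub>R v)"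
      using True by (simp add: bounded_linear_scaleR_right)
    show "(\<lambda>h. norm (Tm G (v + h) - Tm G v - (gt G (norm v) *\<^sub>R h + (kk G v * (v \<bullet> h)) *\<^sub>R v)) / norm h) \<midarrow>0\<rightarrow> 0"
    proof (rule Lim_transform_eventually[OF lim2])
      show "\<forall>\<^sub>F h in at 0. \<bar>gt G (norm h) - deriv G 0\<bar> =
          norm (Tm G (v + h) - Tm G v - (gt G (norm v) *\<^sub>R h + (kk G v * (v \<bullet> h)) *\<^sub>R v)) / norm h"
        unfolding eventually_at_filter
      proof (rule always_eventually, intro allI impI)
        fix h :: "real^'n" assume "h \<noteq> 0"
        have "Tm G (v + h) - Tm G v - (gt G (norm v) *\<^sub>R h + (kk G v * (v \<bullet> h)) *\<^sub>R v)
            = (gt G (norm h) - deriv G 0) *\<^sub>R h"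
        proof -
          have 1: "Tm G (v + h) = gt G (norm h) *\<^sub>R h" using True by (simp add: Tm_gt)
          have 2: "Tm G v = 0" using True by (simp add: Tm_def)
          have 3: "gt G (norm v) = deriv G 0" using True by (simp add: gt_def)
          show ?thesis unfolding 1 2 3 using True by (simp add: scaleR_diff_left)
        qed
        thus "\<bar>gt G (norm h) - deriv G 0\<bar> =
          norm (Tm G (v + h) - Tm G v - (gt G (norm v) *\<^sub>R h + (kk G v * (v \<bullet> h)) *\<^sub>R v)) / norm h"
          using \<open>h \<noteq> 0\<close> by simp
      qed
    qed
  qed
qed

definition Mmat :: "(real \<Rightarrow> real) \<Rightarrow> real^'n \<Rightarrow> real^'n^'n \<Rightarrow> real^'n^'n" where
  "Mmat G v H = (\<chi> i j. gt G (norm v) * H$i$j + (\<Sum>l\<in>UNIV. kk G v * v$i * v$l * H$l$j))"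

lemma Mmat_mv: "Mmat G v H *v h = gt G (norm v) *\<^sub>R (H *v h) + (kk G v * (v \<bullet> (H *v h))) *\<^sub>R v"
proof -
  have "(Mmat G v H *v h) $ i = (gt G (norm v) *\<^sub>R (H *v h) + (kk G v * (v \<bullet> (H *v h))) *\<^sub>R v) $ i" for i
  proof -
    have "(Mmat G v H *v h) $ i = (\<Sum>j\<in>UNIV. (gt G (norm v) * H$i$j + (\<Sum>l\<in>UNIV. kk G v * v$i * v$l * H$l$j)) * h$j)"
      by (simp add: Mmat_def matrix_vector_mult_def)
    also have "\<dots> = gt G (norm v) * (\<Sum>j\<in>UNIV. H$i$j * h$j) + (\<Sum>j\<in>UNIV. \<Sum>l\<in>UNIV. kk G v * v$i * v$l * H$l$j * h$j)"
      by (simp add: algebra_simps sum.distrib sum_distrib_left sum_distrib_right)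
    also have "(\<Sum>j\<in>UNIV. \<Sum>l\<in>UNIV. kk G v * v$i * v$l * H$l$j * h$j) = kk G v * v$i * (\<Sum>l\<in>UNIV. v$l * (\<Sum>j\<in>UNIV. H$l$j * h$j))"
      by (subst sum.swap) (simp add: sum_distrib_left algebra_simps)
    finally show ?thesis
      by (simp add: matrix_vector_mult_def inner_vec_def algebra_simps)
  qed
  thus ?thesis by (simp add: vec_eq_iff)
qed

lemma K_cont:
  fixes v0 :: "real^'n"
  assumes G: "C1_real G" "G 0 = 0"
  shows "isCont (\<lambda>v::real^'n. kk G v * v$i * v$l) v0"
proof (cases "v0 = 0")
  case False
  have dn: "isCont (\<lambda>v::real^'n. deriv G (norm v)) v0"
    by (rule isCont_o2[OF continuous_norm[OF continuous_ident] C1_deriv_cont[OF G(1)]])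
  have gn: "isCont (\<lambda>v::real^'n. G (norm v)) v0"
    by (rule isCont_o2[OF continuous_norm[OF continuous_ident] C1_cont[OF G(1)]])
  have c: "isCont (\<lambda>v::real^'n. (norm v * deriv G (norm v) - G (norm v)) / norm v ^ 3 * v$i * v$l) v0"
    using False by (intro continuous_intros dn gn) auto
  have "\<forall>\<^sub>F v in nhds v0. v \<noteq> 0" using False by (rule t1_space_nhds)
  hence "\<forall>\<^sub>F v in nhds v0. (norm v * deriv G (norm v) - G (norm v)) / norm v ^ 3 * v$i * v$l = kk G v * v$i * v$l"
    by eventually_elim (simp add: kk_def)
  from isCont_cong[OF this] c show ?thesis by simp
next
  case True
  define g where "g v = \<bar>deriv G (norm v) - gt G (norm v)\<bar>" for v :: "real^'n"
  have cg: "isCont g 0"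
  proof -
    have dn: "isCont (\<lambda>v::real^'n. deriv G (norm v)) 0"
      by (rule isCont_o2[OF continuous_norm[OF continuous_ident] C1_deriv_cont[OF G(1)]])
    have gn: "isCont (\<lambda>v::real^'n. gt G (norm v)) 0"
      by (rule isCont_o2[OF continuous_norm[OF continuous_ident] gt_isCont[OF G]])
    show ?thesis unfolding g_def by (intro continuous_intros dn gn)
  qed
  have g0: "g 0 = 0" by (simp add: g_def gt_def)
  have "((\<lambda>v::real^'n. kk G v * v$i * v$l) \<longlongrightarrow> 0) (at 0)"
  proof (rule Lim_null_comparison)
    show "(g \<longlongrightarrow> 0) (at 0)" using cg g0 by (simp add: isCont_def)
    show "\<forall>\<^sub>F v in at 0. norm (kk G v * v$i * v$l) \<le> g v"
      unfolding eventually_at_filter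
    proof (rule always_eventually, intro allI impI)
      fix v :: "real^'n" assume "v \<noteq> 0"
      define r where "r = norm v"
      have r: "r > 0" using \<open>v \<noteq> 0\<close> by (simp add: r_def)
      have "norm (kk G v * v$i * v$l) = \<bar>kk G v\<bar> * \<bar>v$i\<bar> * \<bar>v$l\<bar>" by (simp add: abs_mult)
      also have "\<dots> \<le> \<bar>kk G v\<bar> * r * r"
        unfolding r_def by (intro mult_mono component_le_norm_cart) auto
      also have "\<bar>kk G v\<bar> * r * r = g v"
        using r \<open>v \<noteq> 0\<close> unfolding g_def kk_def gt_def r_def[symmetric]
        by (simp add: abs_divide power3_eq_cube field_simps abs_mult flip: abs_mult_pos)
      finally show "norm (kk G v * v$i * v$l) \<le> g v" .
    qed
  qed
  thus ?thesis using True by (simp add: isCont_def kk_def)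
qed

lemma Mmat_cont:
  fixes v :: "real^'m \<Rightarrow> real^'n" and H :: "real^'m \<Rightarrow> real^'n^'n"
  assumes G: "C1_real G" "G 0 = 0" and cv: "continuous_on UNIV v" and cH: "continuous_on UNIV H"
  shows "continuous_on UNIV (\<lambda>x. Mmat G (v x) (H x))"
proof -
  have cg: "continuous_on UNIV (gt G)"
    by (intro continuous_at_imp_continuous_on ballI gt_isCont[OF G])
  have c1: "continuous_on UNIV (\<lambda>x. gt G (norm (v x)))"
    using continuous_on_compose2[OF cg continuous_on_norm[OF cv]] by simp
  have cK: "continuous_on UNIV (\<lambda>v. kk G v * v$i * v$l)" for i l
    by (intro continuous_at_imp_continuous_on ballI K_cont[OF G])
  have c2: "continuous_on UNIV (\<lambda>x. kk G (v x) * v x $ i * v x $ l)" for i l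
    using continuous_on_compose2[OF cK cv] by simp
  have cH2: "continuous_on UNIV (\<lambda>x. H x $ i $ j)" for i j
    by (intro continuous_on_component cH)
  show ?thesis unfolding Mmat_def
    by (intro continuous_on_vec_lambda continuous_intros c1 c2 cH2)
qed

lemma mv_diff_scaleR: "(H::real^'n^'m) *v (h - a *\<^sub>R v) = H *v h - a *\<^sub>R (H *v v)"
  by (simp add: vec_eq_iff matrix_vector_mult_def sum_subtractf sum_distrib_left algebra_simps)

lemma Mmat_psd:
  fixes v :: "real^'n" and H :: "real^'n^'n"
  assumes G: "mono G" "C1_real G" "G 0 = 0"
    and Hsym: "\<And>h k. k \<bullet> (H *v h) = h \<bullet> (H *v k)"
    and Hpsd: "\<And>h. h \<bullet> (H *v h) \<ge> 0"
    and Hv: "H *v v = c *\<^sub>R v"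
  shows "h \<bullet> (Mmat G v H *v h) \<ge> 0"
proof (cases "v = 0")
  case True
  have "deriv G 0 \<ge> 0" by (rule mono_deriv_nonneg[OF G(1) C1_DERIV[OF G(2)]])
  thus ?thesis using True Hpsd[of h] by (simp add: Mmat_mv gt_def)
next
  case False
  define r where "r = norm v"
  have r: "r > 0" using False by (simp add: r_def)
  define rr where "rr = v \<bullet> v"
  have rr: "rr = r^2" by (simp add: rr_def r_def power2_norm_eq_inner)
  have rrpos: "rr > 0" using r rr by simp
  define s where "s = v \<bullet> h"
  define X where "X = h \<bullet> (H *v h)"
  have vHh: "v \<bullet> (H *v h) = c * s" using Hsym[of h v] Hv by (simp add: s_def inner_commute)
  have M: "h \<bullet> (Mmat G v H *v h) = gt G r * X + kk G v * c * s^2"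
    by (simp add: Mmat_mv inner_add_right vHh X_def s_def r_def power2_eq_square inner_commute)
  have c0: "c \<ge> 0"
  proof -
    have "0 \<le> v \<bullet> (H *v v)" by (rule Hpsd)
    also have "\<dots> = c * rr" by (simp add: Hv rr_def)
    finally show ?thesis using rrpos by (simp add: zero_le_mult_iff)
  qed
  have X: "X \<ge> c * s^2 / rr"
  proof -
    define a where "a = s / rr"
    have "0 \<le> (h - a *\<^sub>R v) \<bullet> (H *v (h - a *\<^sub>R v))" by (rule Hpsd)
    also have "\<dots> = X - a * (c * s) - a * (c * s) + a * a * (c * rr)"
      using vHh Hv by (simp add: mv_diff_scaleR inner_diff_left inner_diff_right X_def s_def rr_def inner_commute algebra_simps)
    also have "\<dots> = X - c * s^2 / rr"
      using rrpos by (simp add: a_def field_simps power2_eq_square)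
    finally show ?thesis by simp
  qed
  have Gr: "G r \<ge> 0" using G(1) G(3) r by (metis less_imp_le monoD)
  have gt0: "gt G r \<ge> 0" using Gr r by (simp add: gt_def)
  have Gd: "deriv G r \<ge> 0" by (rule mono_deriv_nonneg[OF G(1) C1_DERIV[OF G(2)]])
  have kkr: "gt G r + kk G v * rr = deriv G r"
    using r False unfolding gt_def kk_def rr r_def[symmetric] by (simp add: field_simps power3_eq_cube power2_eq_square)
  have "gt G r * X \<ge> gt G r * (c * s^2 / rr)" using mult_left_mono[OF X gt0] .
  hence "h \<bullet> (Mmat G v H *v h) \<ge> gt G r * (c * s^2 / rr) + kk G v * c * s^2" using M by simp
  also have "gt G r * (c * s^2 / rr) + kk G v * c * s^2 = (c * s^2 / rr) * (gt G r + kk G v * rr)"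
    using rrpos by (simp add: field_simps)
  also have "\<dots> = (c * s^2 / rr) * deriv G r" by (simp add: kkr)
  finally have fin: "h \<bullet> (Mmat G v H *v h) \<ge> (c * s^2 / rr) * deriv G r" .
  have "(c * s^2 / rr) * deriv G r \<ge> 0"
    using c0 rrpos Gd by (intro mult_nonneg_nonneg divide_nonneg_pos) auto
  with fin show ?thesis by linarith
qed

lemma partI:
  fixes f :: "real^'n \<Rightarrow> real"
  assumes f: "f \<in> classF" and G: "mono G" "C1_real G" "G 0 = 0"
  shows "\<exists>\<phi>\<in>classF.
           (\<forall>x. grad f x \<noteq> 0 \<longrightarrow>
              grad \<phi> x = G (norm (grad f x)) *\<^sub>R ((1 / norm (grad f x)) *\<^sub>R grad f x)) \<and>
           (\<forall>x. grad f x = 0 \<longrightarrow> grad \<phi> x = 0)"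
proof -
  have cvx: "convex_on UNIV f" and c2: "C2 f"
    and par: "\<And>x. \<exists>c. Hess f x *v grad f x = c *\<^sub>R grad f x"
    using f by (auto simp: classF_def)
  define F where "F x = Tm G (grad f x)" for x
  define M where "M x = Mmat G (grad f x) (Hess f x)" for x
  have dF: "(F has_derivative (\<lambda>h. M x *v h)) (at x)" for x
  proof -
    have "(F has_derivative (\<lambda>h. gt G (norm (grad f x)) *\<^sub>R (Hess f x *v h) +
        (kk G (grad f x) * (grad f x \<bullet> (Hess f x *v h))) *\<^sub>R grad f x)) (at x)"
      unfolding F_def[abs_def]
      by (rule has_derivative_compose[OF C2_Hess[OF c2] Tm_deriv[OF G(2,3)]])
    thus ?thesis by (simp add: M_def Mmat_mv)
  qed
  have cM: "continuous_on UNIV M"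
    unfolding M_def by (rule Mmat_cont[OF G(2,3) C2_grad_cont[OF c2] C2_Hess_cont[OF c2]])
  have sym: "k \<bullet> (M x *v h) = h \<bullet> (M x *v k)" for x h k
  proof -
    obtain c where c: "Hess f x *v grad f x = c *\<^sub>R grad f x" using par by blast
    have vH: "grad f x \<bullet> (Hess f x *v h) = c * (h \<bullet> grad f x)" for h
      using schwarz[OF c2, of "grad f x" x h] c by simp
    show ?thesis
      by (simp add: M_def Mmat_mv inner_add_right vH schwarz[OF c2, of k x h] inner_commute)
  qed
  have psd: "h \<bullet> (M x *v h) \<ge> 0" for x h
  proof -
    obtain c where c: "Hess f x *v grad f x = c *\<^sub>R grad f x" using par by blast
    show ?thesis unfolding M_def
      by (rule Mmat_psd[OF G _ _ c]) (auto intro: schwarz[OF c2] convex_PSD[OF cvx c2])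
  qed
  define \<phi> where "\<phi> x = integral {0..1} (\<lambda>t. F (t *\<^sub>R x) \<bullet> x)" for x
  have d\<phi>: "(\<phi> has_derivative (\<lambda>h. h \<bullet> F x)) (at x)" for x
    unfolding \<phi>_def[abs_def] by (rule potential[OF dF cM sym])
  have g\<phi>: "grad \<phi> = F" by (rule ext, rule grad_unique[OF d\<phi>])
  have H\<phi>: "Hess \<phi> x = M x" for x by (rule Hess_unique) (simp add: g\<phi> dF)
  have "C2 \<phi>" unfolding C2_def
  proof (intro conjI allI)
    show "\<phi> differentiable at x" for x using d\<phi> differentiable_def by blast
    show "grad \<phi> differentiable at x" for x using dF differentiable_def g\<phi> by metis
    show "continuous_on UNIV (Hess \<phi>)" using cM H\<phi> by (metis ext)
  qed
  moreover have "convex_on UNIV \<phi>" by (rule PSD_imp_convex[OF d\<phi> dF psd])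
  moreover have "\<exists>c. Hess \<phi> x *v grad \<phi> x = c *\<^sub>R grad \<phi> x" for x
  proof -
    obtain c where c: "Hess f x *v grad f x = c *\<^sub>R grad f x" using par by blast
    define v where "v = grad f x"
    define g where "g = gt G (norm v)"
    have Fx: "F x = g *\<^sub>R v" by (simp add: F_def Tm_gt g_def v_def)
    have "M x *v F x = (g * c + kk G v * c * (v \<bullet> v)) *\<^sub>R F x"
      using c unfolding Fx M_def v_def[symmetric]
      by (simp add: Mmat_mv mv_scaleR algebra_simps g_def)
    thus ?thesis by (simp add: H\<phi> g\<phi>)
  qed
  ultimately have "\<phi> \<in> classF" by (simp add: classF_def)
  moreover have "\<forall>x. grad f x \<noteq> 0 \<longrightarrow>
              grad \<phi> x = G (norm (grad f x)) *\<^sub>R ((1 / norm (grad f x)) *\<^sub>R grad f x)"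
    by (simp add: g\<phi> F_def Tm_def)
  moreover have "\<forall>x. grad f x = 0 \<longrightarrow> grad \<phi> x = 0"
    by (simp add: g\<phi> F_def Tm_def)
  ultimately show ?thesis by blast
qed

lemma vec_eq_by_inner:
  fixes a b :: "'a::real_inner"
  assumes "\<And>h. h \<bullet> a = h \<bullet> b"
  shows "a = b"
proof -
  have "(a - b) \<bullet> (a - b) = 0" using assms[of "a - b"] by (simp add: inner_diff_right)
  thus ?thesis by simp
qed

lemma null_const:
  fixes r :: "'a::topological_space \<Rightarrow> real"
  assumes ae: "AE s in lborel. s * deriv G s - G s \<noteq> 0"
    and cr: "continuous_on S r" and cS: "connected S"
    and z: "\<And>y. y \<in> S \<Longrightarrow> r y * deriv G (r y) - G (r y) = 0"
    and x0: "x0 \<in> S" and y: "y \<in> S"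
  shows "r y = r x0"
proof (rule ccontr)
  assume ne: "r y \<noteq> r x0"
  obtain N where N: "{s \<in> space lborel. \<not> (s * deriv G s - G s \<noteq> 0)} \<subseteq> N"
    "emeasure lborel N = 0" "N \<in> sets lborel"
    using AE_E[OF ae] by blast
  have sub: "r ` S \<subseteq> N" using N(1) z by auto
  have conn: "connected (r ` S)" by (rule connected_continuous_image[OF cr cS])
  define a where "a = min (r y) (r x0)"
  define b where "b = max (r y) (r x0)"
  have ab: "a < b" using ne by (simp add: a_def b_def)
  have "{a..b} \<subseteq> r ` S"
    by (rule connected_contains_Icc[OF conn]) (use x0 y in \<open>auto simp: a_def b_def min_def max_def\<close>)
  hence "{a..b} \<subseteq> N" using sub by blast
  hence "emeasure lborel {a..b} \<le> emeasure lborel N" by (rule emeasure_mono) (use N in auto)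
  hence "ennreal (b - a) \<le> 0" using ab N(2) by (simp add: emeasure_lborel_Icc)
  thus False using ab by simp
qed

lemma nondeg:
  fixes f \<phi> :: "real^'n \<Rightarrow> real"
  assumes c2f: "C2 f" and c2p: "C2 \<phi>" and G: "C1_real G" "G 0 = 0"
    and eq: "\<And>y. grad f y \<noteq> 0 \<Longrightarrow> grad \<phi> y = Tm G (grad f y)"
    and x: "grad f x \<noteq> 0" and kx: "kk G (grad f x) \<noteq> 0"
  shows "\<exists>c. Hess f x *v grad f x = c *\<^sub>R grad f x"
proof -
  define U where "U = grad f -` (- {0})"
  have U: "open U" unfolding U_def by (rule open_vimage[OF _ C2_grad_cont[OF c2f]]) auto
  have xU: "x \<in> U" using x by (simp add: U_def)
  define v where "v = grad f x"
  define H where "H = Hess f x"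
  define g where "g = gt G (norm v)"
  define k where "k = kk G v"
  have d1: "((\<lambda>y. Tm G (grad f y)) has_derivative (\<lambda>h. g *\<^sub>R (H *v h) + (k * (v \<bullet> (H *v h))) *\<^sub>R v)) (at x)"
    unfolding g_def k_def v_def H_def
    by (rule has_derivative_compose[OF C2_Hess[OF c2f] Tm_deriv[OF G]])
  have d2: "(grad \<phi> has_derivative (\<lambda>h. g *\<^sub>R (H *v h) + (k * (v \<bullet> (H *v h))) *\<^sub>R v)) (at x)"
    by (rule has_derivative_transform_within_open[OF d1 U xU]) (simp add: U_def eq)
  have Hp: "Hess \<phi> x *v h = g *\<^sub>R (H *v h) + (k * (v \<bullet> (H *v h))) *\<^sub>R v" for h
    using has_derivative_unique[OF C2_Hess[OF c2p] d2] by metis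
  have Hs: "a \<bullet> (H *v b) = b \<bullet> (H *v a)" for a b unfolding H_def by (rule schwarz[OF c2f])
  define rr where "rr = v \<bullet> v"
  have rr: "rr \<noteq> 0" using x by (simp add: rr_def v_def)
  have key: "k * (h \<bullet> (H *v v)) * rr = k * (v \<bullet> (H *v v)) * (h \<bullet> v)" for h
  proof -
    have "v \<bullet> (Hess \<phi> x *v h) = h \<bullet> (Hess \<phi> x *v v)" by (rule schwarz[OF c2p])
    hence "g * (v \<bullet> (H *v h)) + k * (v \<bullet> (H *v h)) * rr = g * (h \<bullet> (H *v v)) + k * (v \<bullet> (H *v v)) * (h \<bullet> v)"
      by (simp add: Hp inner_add_right rr_def)
    thus ?thesis using Hs[of v h] by simp
  qed
  define c where "c = (v \<bullet> (H *v v)) / rr"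
  have "H *v v = c *\<^sub>R v"
  proof (rule vec_eq_by_inner)
    fix h
    have "(h \<bullet> (H *v v)) * rr = (v \<bullet> (H *v v)) * (h \<bullet> v)"
      using key[of h] kx by (simp add: k_def v_def mult.assoc)
    thus "h \<bullet> (H *v v) = h \<bullet> (c *\<^sub>R v)" using rr by (simp add: c_def field_simps)
  qed
  thus ?thesis unfolding H_def v_def by blast
qed

lemma partII:
  fixes f \<phi> :: "real^'n \<Rightarrow> real"
  assumes cvx: "convex_on UNIV f" and c2f: "C2 f" and c2p: "C2 \<phi>" and G: "C1_real G" "G 0 = 0"
    and ae: "AE s in lborel. s * deriv G s - G s \<noteq> 0"
    and eq0: "\<forall>x. grad f x \<noteq> 0 \<longrightarrow>
                 grad \<phi> x = G (norm (grad f x)) *\<^sub>R ((1 / norm (grad f x)) *\<^sub>R grad f x)"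
  shows "f \<in> classF"
proof -
  have eq: "\<And>y. grad f y \<noteq> 0 \<Longrightarrow> grad \<phi> y = Tm G (grad f y)"
    using eq0 by (simp add: Tm_def)
  define P where "P x \<longleftrightarrow> (\<exists>c. Hess f x *v grad f x = c *\<^sub>R grad f x)" for x
  have "P x0" for x0
  proof (cases "grad f x0 = 0")
    case True thus ?thesis by (simp add: P_def)
  next
    case False
    show ?thesis
    proof (rule ccontr)
      assume nP: "\<not> P x0"
      define U where "U = grad f -` (- {0})"
      have U: "open U" unfolding U_def by (rule open_vimage[OF _ C2_grad_cont[OF c2f]]) auto
      have x0U: "x0 \<in> U" using False by (simp add: U_def)
      define Q where "Q x = Hess f x *v grad f x - ((grad f x \<bullet> (Hess f x *v grad f x)) / (grad f x \<bullet> grad f x)) *\<^sub>R grad f x" for x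
      have PQ: "P x \<Longrightarrow> Q x = 0" for x
      proof -
        assume "P x"
        then obtain c where c: "Hess f x *v grad f x = c *\<^sub>R grad f x" by (auto simp: P_def)
        show "Q x = 0"
        proof (cases "grad f x = 0")
          case True thus ?thesis by (simp add: Q_def)
        next
          case False thus ?thesis by (simp add: Q_def c)
        qed
      qed
      have Q0: "Q x0 \<noteq> 0"
      proof
        assume "Q x0 = 0"
        hence "P x0" unfolding P_def Q_def by (metis eq_iff_diff_eq_0)
        with nP show False by simp
      qed
      have cQ: "continuous_on U Q"
      proof -
        have cg: "continuous_on U (grad f)"
          using C2_grad_cont[OF c2f] continuous_on_subset by blast
        have cH: "continuous_on U (Hess f)"
          using C2_Hess_cont[OF c2f] continuous_on_subset by blast
        have cHv: "continuous_on U (\<lambda>x. Hess f x *v grad f x)"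
          by (rule continuous_on_mv2[OF cH cg])
        show ?thesis unfolding Q_def
          by (intro continuous_intros cHv cg) (auto simp: U_def)
      qed
      define W where "W = U \<inter> Q -` (- {0})"
      have W: "open W" unfolding W_def
        using cQ U continuous_on_open_vimage[OF U] by (metis Int_commute open_Compl closed_singleton)
      have x0W: "x0 \<in> W" using x0U Q0 by (simp add: W_def)
      obtain e where e: "e > 0" "ball x0 e \<subseteq> W" using W x0W openE by blast
      have kz: "norm (grad f y) * deriv G (norm (grad f y)) - G (norm (grad f y)) = 0"
        if y: "y \<in> ball x0 e" for y
      proof -
        have yW: "y \<in> W" using y e by blast
        hence gy: "grad f y \<noteq> 0" and Qy: "Q y \<noteq> 0" by (auto simp: W_def U_def)
        have "\<not> P y" using PQ Qy by blast
        hence "kk G (grad f y) = 0" using nondeg[OF c2f c2p G eq gy] by (auto simp: P_def)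
        thus ?thesis using gy by (simp add: kk_def)
      qed
      have cr: "continuous_on (ball x0 e) (\<lambda>y. norm (grad f y))"
        using continuous_on_norm[OF C2_grad_cont[OF c2f]] continuous_on_subset by blast
      have const: "norm (grad f y) = norm (grad f x0)" if "y \<in> ball x0 e" for y
        by (rule null_const[OF ae cr connected_ball kz]) (use e that in auto)
      define q where "q y = grad f y \<bullet> grad f y" for y
      have dq: "(q has_derivative (\<lambda>h. grad f x0 \<bullet> (Hess f x0 *v h) + (Hess f x0 *v h) \<bullet> grad f x0)) (at x0)"
        unfolding q_def[abs_def] by (rule has_derivative_inner[OF C2_Hess[OF c2f] C2_Hess[OF c2f]])
      have dq0: "(q has_derivative (\<lambda>h. 0)) (at x0)"
      proof (rule has_derivative_transform_within_open[OF has_derivative_const[of "q x0"] open_ball])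
        show "x0 \<in> ball x0 e" using e by simp
        show "q x0 = q y" if "y \<in> ball x0 e" for y
          using const[OF that] by (simp add: q_def power2_norm_eq_inner[symmetric])
      qed
      have "(\<lambda>h. grad f x0 \<bullet> (Hess f x0 *v h) + (Hess f x0 *v h) \<bullet> grad f x0) = (\<lambda>h. 0)"
        by (rule has_derivative_unique[OF dq dq0])
      hence z: "grad f x0 \<bullet> (Hess f x0 *v h) = 0" for h
      proof -
        assume "(\<lambda>h. grad f x0 \<bullet> (Hess f x0 *v h) + (Hess f x0 *v h) \<bullet> grad f x0) = (\<lambda>h. 0)"
        hence "grad f x0 \<bullet> (Hess f x0 *v h) + (Hess f x0 *v h) \<bullet> grad f x0 = 0" by metis
        thus ?thesis by (simp add: inner_commute)
      qed
      have "Hess f x0 *v grad f x0 = 0 *\<^sub>R grad f x0"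
      proof (rule vec_eq_by_inner)
        fix h show "h \<bullet> (Hess f x0 *v grad f x0) = h \<bullet> (0 *\<^sub>R grad f x0)"
          using z[of h] schwarz[OF c2f, of "grad f x0" x0 h] by simp
      qed
      hence "P x0" unfolding P_def by blast
      with nP show False by simp
    qed
  qed
  thus ?thesis using cvx c2f by (simp add: classF_def P_def)
qed

theorem proposition3p2:
  fixes f :: "real^'n \<Rightarrow> real"
  assumes "convex_on UNIV f" and "C2 f"
  shows "(f \<in> classF \<longrightarrow>
            (\<forall>G. mono G \<and> C1_real G \<and> G 0 = 0 \<longrightarrow>
              (\<exists>\<phi>\<in>classF.
                 (\<forall>x. grad f x \<noteq> 0 \<longrightarrow>
                    grad \<phi> x = G (norm (grad f x)) *\<^sub>R ((1 / norm (grad f x)) *\<^sub>R grad f x)) \<and>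
                 (\<forall>x. grad f x = 0 \<longrightarrow> grad \<phi> x = 0))))
       \<and> ((\<exists>G \<phi>. mono G \<and> C1_real G \<and> convex_on UNIV \<phi> \<and> C2 \<phi> \<and> G 0 = 0 \<and>
              (AE s in lborel. s * deriv G s - G s \<noteq> 0) \<and>
              (\<forall>x. grad f x \<noteq> 0 \<longrightarrow>
                 grad \<phi> x = G (norm (grad f x)) *\<^sub>R ((1 / norm (grad f x)) *\<^sub>R grad f x)))
          \<longrightarrow> f \<in> classF)"
proof (intro conjI impI allI)
  fix G :: "real \<Rightarrow> real"
  assume "f \<in> classF" "mono G \<and> C1_real G \<and> G 0 = 0"
  thus "\<exists>\<phi>\<in>classF.
                 (\<forall>x. grad f x \<noteq> 0 \<longrightarrow>
                    grad \<phi> x = G (norm (grad f x)) *\<^sub>R ((1 / norm (grad f x)) *\<^sub>R grad f x)) \<and>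
                 (\<forall>x. grad f x = 0 \<longrightarrow> grad \<phi> x = 0)"
    using partI by blast
next
  assume "\<exists>G \<phi>. mono G \<and> C1_real G \<and> convex_on UNIV \<phi> \<and> C2 \<phi> \<and> G 0 = 0 \<and>
              (AE s in lborel. s * deriv G s - G s \<noteq> 0) \<and>
              (\<forall>x. grad f x \<noteq> 0 \<longrightarrow>
                 grad \<phi> x = G (norm (grad f x)) *\<^sub>R ((1 / norm (grad f x)) *\<^sub>R grad f x))"
  then obtain G and \<phi> :: "real^'n \<Rightarrow> real" where h: "C1_real G" "C2 \<phi>" "G 0 = 0"
    "AE s in lborel. s * deriv G s - G s \<noteq> 0"
    "\<forall>x. grad f x \<noteq> 0 \<longrightarrow>
                 grad \<phi> x = G (norm (grad f x)) *\<^sub>R ((1 / norm (grad f x)) *\<^sub>R grad f x)"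
    by blast
  show "f \<in> classF" by (rule partII[OF assms(1,2) h(2,1,3,4,5)])
qed

end
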